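(* Let $T$ be a heterogeneous finger search tree and consider splitting $T$, by a sequence of split operations, into $k$ smaller trees $t_1,\dots,t_k$. Then the work required to split $T$ is $O\left(\sum_{i=1}^k\lg(|t_i|+1)\right)$, regardless of the order in which the splits are performed.
   Context: For a heterogeneous finger search tree $T$ (a BST variant) and a key $k$, $\mathrm{split}(T,k)$ returns two trees, one with the keys of $T$ less than $k$ and one with the keys greater than $k$, at amortized cost $O(\lg(\min(|T_1|,|T_2|)+1))$, where $T_1,T_2$ are the two returned trees. Keys are distinct, and the trees $t_1,\dots,t_k$ partition the keys of $T$ into contiguous key ranges. *)

theory Defs
  imports Complex_Main
begin

text \<open>A tree is represented by its
  (finite) key set.  The state is the ordered list of current trees (contiguous key ranges).\<close>

inductive splits :: "('a::linorder set \<Rightarrow> 'a set \<Rightarrow> real) \<Rightarrow> 'a set list \<Rightarrow> 'a set list \<Rightarrow> real \<Rightarrow> bool"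
  for w where
  stop: "splits w ts ts 0"
| step: "\<lbrakk> j < length ts; k \<notin> ts ! j;
          splits w (take j ts @ [{x \<in> ts ! j. x < k}, {x \<in> ts ! j. k < x}] @ drop (Suc j) ts) us W \<rbrakk>
         \<Longrightarrow> splits w ts us (w {x \<in> ts ! j. x < k} {x \<in> ts ! j. k < x} + W)"

end

theory Submission
  imports Defs
begin

lemma nat_ineq:
  fixes a b :: nat
  assumes "1 \<le> a" "a \<le> b"
  shows "(a+b+1)^3 \<le> (a+1)^2 * (b+1)^3"
proof -
  have h1: "(a+b+1)*(a+1) \<le> (b+1)*(2*a+1)"
  proof -
    have "a*a \<le> a*b" using assms by simp
    thus ?thesis by (simp add: algebra_simps)
  qed
  have h2: "(2*a+1)^3 \<le> (a+1)^5"
  proof (cases "a = 1")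
    case True thus ?thesis by (simp add: numeral_eq_Suc)
  next
    case False
    hence "2 \<le> a" using assms by simp
    hence "3 \<le> a+1" by simp
    hence "3^2 \<le> (a+1)^2" by (rule power_mono) simp
    hence "8 \<le> (a+1)^2" by simp
    have "(2*a+1)^3 \<le> (2*(a+1))^3" by (intro power_mono) auto
    also have "\<dots> = 8 * (a+1)^3" by (simp only: power_mult_distrib) simp
    also have "\<dots> \<le> (a+1)^2 * (a+1)^3" using mult_right_mono[OF \<open>8 \<le> (a+1)^2\<close>, of "(a+1)^3"] by blast
    also have "\<dots> = (a+1)^5" by (simp flip: power_add)
    finally show ?thesis .
  qed
  have "(a+b+1)^3 * (a+1)^3 \<le> (b+1)^3 * (2*a+1)^3"
    using power_mono[OF h1, of 3] by (simp only: power_mult_distrib)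
  also have "\<dots> \<le> (b+1)^3 * (a+1)^5" using h2 by simp
  also have "\<dots> = ((a+1)^2 * (b+1)^3) * (a+1)^3" by (simp add: power_add[symmetric] mult_ac)
  finally show ?thesis by simp
qed

lemma log_ineq:
  fixes a b :: nat
  shows "log 2 (real (min a b) + 1) \<le> 3 * (log 2 (real a + 1) + log 2 (real b + 1) - log 2 (real (a + b) + 1))"
proof -
  have main: "log 2 (real a + 1) \<le> 3 * (log 2 (real a + 1) + log 2 (real b + 1) - log 2 (real (a + b) + 1))"
    if "a \<le> b" for a b :: nat
  proof (cases "a = 0")
    case True thus ?thesis by simp
  next
    case False
    have "real ((a+b+1)^3) \<le> real ((a+1)^2 * (b+1)^3)"
      using nat_ineq[of a b] False that by (simp only: of_nat_le_iff)
    hence "(real a + real b + 1)^3 \<le> (real a + 1)^2 * (real b + 1)^3" by (simp add: add_ac)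
    hence "log 2 ((real a + real b + 1)^3) \<le> log 2 ((real a + 1)^2 * (real b + 1)^3)"
      by (subst log_le_cancel_iff) auto
    hence "3 * log 2 (real a + real b + 1) \<le> 2 * log 2 (real a + 1) + 3 * log 2 (real b + 1)"
      by (simp add: log_mult log_nat_power)
    thus ?thesis by simp
  qed
  show ?thesis
  proof (cases "a \<le> b")
    case True thus ?thesis using main[of a b] by simp
  next
    case False thus ?thesis using main[of b a] by (simp add: add.commute)
  qed
qed

definition g :: "'a set \<Rightarrow> real" where "g t = log 2 (real (card t) + 1)"

lemma inv:
  assumes "splits w ts us W" "\<forall>t\<in>set ts. finite t" "c \<ge> 0"
    "\<forall>A B. finite A \<longrightarrow> finite B \<longrightarrow> w A B \<le> c * log 2 (real (min (card A) (card B)) + 1)"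
  shows "W \<le> 3 * c * ((\<Sum>t\<leftarrow>us. g t) - (\<Sum>t\<leftarrow>ts. g t))"
  using assms
proof (induction rule: splits.induct)
  case (stop ts)
  then show ?case by simp
next
  case (step j ts k us W)
  define A where "A = {x \<in> ts ! j. x < k}"
  define B where "B = {x \<in> ts ! j. k < x}"
  have fin: "finite (ts ! j)" using step by auto
  have fA: "finite A" "finite B" using fin by (auto simp: A_def B_def)
  have un: "ts ! j = A \<union> B" "A \<inter> B = {}" using step(2) by (auto simp: A_def B_def dest: not_less_iff_gr_or_eq[THEN iffD1])
  have card: "card (ts ! j) = card A + card B" using un fA by (simp add: card_Un_disjoint)
  have finall: "\<forall>t\<in>set (take j ts @ [A, B] @ drop (Suc j) ts). finite t"
    using step(5) fA by (auto dest: in_set_takeD in_set_dropD)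
  have IH: "W \<le> 3 * c * ((\<Sum>t\<leftarrow>us. g t) - (\<Sum>t\<leftarrow>(take j ts @ [A, B] @ drop (Suc j) ts). g t))"
    using step.IH finall step(6,7) unfolding A_def B_def by blast
  have ts_eq: "ts = take j ts @ [ts ! j] @ drop (Suc j) ts" using step(1) by (simp add: id_take_nth_drop)
  have sum_eq: "(\<Sum>t\<leftarrow>ts. g t) = (\<Sum>t\<leftarrow>take j ts. g t) + g (ts ! j) + (\<Sum>t\<leftarrow>drop (Suc j) ts. g t)"
    by (subst ts_eq) simp
  have w: "w A B \<le> c * log 2 (real (min (card A) (card B)) + 1)" using step(7) fA by blast
  have l: "log 2 (real (min (card A) (card B)) + 1) \<le> 3 * (g A + g B - g (ts ! j))"
    using log_ineq[of "card A" "card B"] card by (simp add: g_def)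
  have "w A B \<le> c * (3 * (g A + g B - g (ts ! j)))"
    using w mult_left_mono[OF l step(6)] by linarith
  then show ?case using IH sum_eq unfolding A_def[symmetric] B_def[symmetric]
    by (simp add: algebra_simps)
qed

theorem lemma8:
  fixes c :: real
  assumes "c \<ge> 0"
  shows "\<exists>C. \<forall>(w :: 'a::linorder set \<Rightarrow> 'a set \<Rightarrow> real) T ts W.
           (\<forall>A B. finite A \<longrightarrow> finite B \<longrightarrow> w A B \<le> c * log 2 (real (min (card A) (card B)) + 1))
           \<longrightarrow> finite T \<longrightarrow> splits w [T] ts W
           \<longrightarrow> W \<le> C * (\<Sum>t\<leftarrow>ts. log 2 (real (card t) + 1))"
proof (intro exI[of _ "3*c"] allI impI)
  fix w :: "'a::linorder set \<Rightarrow> 'a set \<Rightarrow> real" and T ts W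
  assume h: "\<forall>A B. finite A \<longrightarrow> finite B \<longrightarrow> w A B \<le> c * log 2 (real (min (card A) (card B)) + 1)"
    "finite T" "splits w [T] ts W"
  have "W \<le> 3 * c * ((\<Sum>t\<leftarrow>ts. g t) - (\<Sum>t\<leftarrow>[T]. g t))"
    using inv[OF h(3) _ assms h(1)] h(2) by simp
  moreover have "g T \<ge> 0" by (simp add: g_def)
  ultimately have "W \<le> 3 * c * (\<Sum>t\<leftarrow>ts. g t)"
    using assms by (simp add: algebra_simps) (smt (verit) mult_nonneg_nonneg)
  thus "W \<le> 3 * c * (\<Sum>t\<leftarrow>ts. log 2 (real (card t) + 1))" by (simp add: g_def)
qed

end
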